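(* Let $\tau:\mathcal{X}\to\mathcal{X}$ be a continuous map on a sequentially compact topological space $\mathcal{X}$, let $\mathcal{F}\subseteq\mathcal{X}$ be nonempty, and let $S:\mathcal{X}\to\mathbb{R}$ be a multi-central Lyapunov function for $\tau$ around $\mathcal{F}$. Let $\mathcal{X}/\mathcal{F}$ be the quotient space obtained by collapsing $\mathcal{F}$ to a single point $[\mathcal{F}]$, with quotient map $\varphi:\mathcal{X}\to\mathcal{X}/\mathcal{F}$ and the quotient topology. Define $\tilde\tau:\mathcal{X}/\mathcal{F}\to\mathcal{X}/\mathcal{F}$ by $\tilde\tau([x])=\varphi(\tau(x))$ for $x\notin\mathcal{F}$ and $\tilde\tau([\mathcal{F}])=[\mathcal{F}]$. Then $\tilde\tau$ is mixing with fixed point $[\mathcal{F}]$, i.e. $\tilde\tau^n(y)\to[\mathcal{F}]$ for every $y\in\mathcal{X}/\mathcal{F}$.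
   Context: $\tau^n$ is the $n$-fold composition of $\tau$. A continuous map $S:\mathcal{X}\to\mathbb{R}$ is a multi-central Lyapunov function for $\tau$ around $\mathcal{F}\subseteq\mathcal{X}$ if for every $x\in\mathcal{X}$ the sequence $S(\tau^n(x))$ converges, $S$ is constant on $\mathcal{F}$, $\tau(\mathcal{F})\subseteq\mathcal{F}$, and $\lim_{n\to\infty}S(\tau^n(x))\neq S(x)$ for all $x\notin\mathcal{F}$. *)

theory Defs
  imports "HOL-Analysis.Analysis"
begin

definition seq_compact_space :: "'a topology \<Rightarrow> bool" where
  "seq_compact_space X \<longleftrightarrow>
     (\<forall>x::nat \<Rightarrow> 'a. (\<forall>n. x n \<in> topspace X) \<longrightarrow>
        (\<exists>r l. strict_mono r \<and> limitin X (x \<circ> r) l sequentially))"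

definition multi_central_lyapunov ::
  "'a topology \<Rightarrow> ('a \<Rightarrow> 'a) \<Rightarrow> 'a set \<Rightarrow> ('a \<Rightarrow> real) \<Rightarrow> bool" where
  "multi_central_lyapunov X \<tau> F S \<longleftrightarrow>
     continuous_map X euclideanreal S \<and>
     (\<forall>x\<in>topspace X. convergent (\<lambda>n. S ((\<tau> ^^ n) x))) \<and>
     (\<exists>c. \<forall>x\<in>F. S x = c) \<and>
     \<tau> ` F \<subseteq> F \<and>
     (\<forall>x\<in>topspace X - F. lim (\<lambda>n. S ((\<tau> ^^ n) x)) \<noteq> S x)"

definition collapse :: "'a set \<Rightarrow> 'a \<Rightarrow> 'a set" where
  "collapse F x = (if x \<in> F then F else {x})"

definition collapsed_map :: "'a set \<Rightarrow> ('a \<Rightarrow> 'a) \<Rightarrow> 'a set \<Rightarrow> 'a set" where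
  "collapsed_map F \<tau> c = (if c = F then F else collapse F (\<tau> (the_elem c)))"

end

theory Submission
  imports Defs "HOL-Library.Infinite_Set"
begin

lemma cm_funpow: "continuous_map X X f \<Longrightarrow> continuous_map X X (f ^^ m)"
  by (induction m) (auto intro: continuous_map_compose)

lemma orbit_collapse:
  assumes "\<tau> ` F \<subseteq> F"
  shows "(collapsed_map F \<tau> ^^ n) (collapse F x) = collapse F ((\<tau> ^^ n) x)"
proof (induction n)
  case 0 then show ?case by simp
next
  case (Suc n)
  define y where "y = (\<tau> ^^ n) x"
  show ?case
  proof (cases "y \<in> F")
    case True
    then have "\<tau> y \<in> F" using assms by blast
    then show ?thesis using Suc True by (simp add: y_def collapsed_map_def collapse_def)
  next
    case False
    then have "{y} \<noteq> F" by blast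
    then show ?thesis using Suc False by (simp add: y_def collapsed_map_def collapse_def)
  qed
qed

lemma core:
  assumes ct: "continuous_map X X \<tau>"
    and sc: "seq_compact_space X"
    and ly: "multi_central_lyapunov X \<tau> F S"
    and x: "x \<in> topspace X" and V: "openin X V" and FV: "F \<subseteq> V"
  shows "eventually (\<lambda>n. (\<tau> ^^ n) x \<in> V) sequentially"
proof (rule ccontr)
  assume ne: "\<not> ?thesis"
  have cS: "continuous_map X euclideanreal S"
    and cv: "\<And>x. x \<in> topspace X \<Longrightarrow> convergent (\<lambda>n. S ((\<tau> ^^ n) x))"
    and nl: "\<And>x. x \<in> topspace X - F \<Longrightarrow> lim (\<lambda>n. S ((\<tau> ^^ n) x)) \<noteq> S x"
    using ly unfolding multi_central_lyapunov_def by auto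
  have inf: "infinite {n. (\<tau> ^^ n) x \<notin> V}"
    using ne by (simp add: cofinite_eq_sequentially[symmetric] eventually_cofinite)
  from infinite_enumerate[OF inf] obtain r :: "nat \<Rightarrow> nat" where r: "strict_mono r" "\<And>n. (\<tau> ^^ r n) x \<notin> V"
    by auto
  have top: "\<And>n y. y \<in> topspace X \<Longrightarrow> (\<tau> ^^ n) y \<in> topspace X"
    using cm_funpow[OF ct] by (simp add: continuous_map_def Pi_iff)
  obtain s z where s: "strict_mono s" "limitin X ((\<lambda>k. (\<tau> ^^ r k) x) \<circ> s) z sequentially"
  proof -
    have "\<forall>n. (\<lambda>k. (\<tau> ^^ r k) x) n \<in> topspace X" using x top by simp
    then have "\<exists>s l. strict_mono s \<and> limitin X ((\<lambda>k. (\<tau> ^^ r k) x) \<circ> s) l sequentially"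
      using sc unfolding seq_compact_space_def by (elim allE[where x="\<lambda>k. (\<tau> ^^ r k) x"]) (erule mp)
    then show ?thesis using that by blast
  qed
  define t where "t = r \<circ> s"
  have t: "strict_mono t" using r s by (simp add: t_def strict_mono_def)
  have lt: "limitin X (\<lambda>k. (\<tau> ^^ t k) x) z sequentially"
    using s(2) by (simp add: t_def comp_def)
  have "z \<in> topspace X - V"
    apply (rule limitin_closedin[OF lt])
    using V r(2) x top by (auto simp: t_def)
  then have z: "z \<in> topspace X - F" "z \<in> topspace X" using FV by auto
  define L where "L = lim (\<lambda>n. S ((\<tau> ^^ n) x))"
  have SL: "(\<lambda>n. S ((\<tau> ^^ n) x)) \<longlonglongrightarrow> L"
    using cv[OF x] by (simp add: L_def convergent_LIMSEQ_iff)
  have all: "S ((\<tau> ^^ m) z) = L" for m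
  proof -
    have "limitin X ((\<tau> ^^ m) \<circ> (\<lambda>k. (\<tau> ^^ t k) x)) ((\<tau> ^^ m) z) sequentially"
      by (rule continuous_map_limit[OF cm_funpow[OF ct] lt])
    from continuous_map_limit[OF cS this]
    have 1: "(\<lambda>k. S ((\<tau> ^^ (m + t k)) x)) \<longlonglongrightarrow> S ((\<tau> ^^ m) z)"
      by (simp add: comp_def funpow_add)
    have sm: "strict_mono (\<lambda>k. m + t k)" using t by (simp add: strict_mono_def)
    have 2: "(\<lambda>k. S ((\<tau> ^^ (m + t k)) x)) \<longlonglongrightarrow> L"
      using LIMSEQ_subseq_LIMSEQ[OF SL sm] by (simp add: comp_def)
    show ?thesis using LIMSEQ_unique[OF 1 2] .
  qed
  have "S z = L" using all[of 0] by simp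
  moreover have "lim (\<lambda>n. S ((\<tau> ^^ n) z)) = L" using all by simp
  ultimately show False using nl[OF z(1)] by simp
qed

theorem mainTheorem6:
  fixes X :: "'a topology" and Q :: "'a set topology"
    and \<tau> :: "'a \<Rightarrow> 'a" and F :: "'a set" and S :: "'a \<Rightarrow> real"
  assumes "continuous_map X X \<tau>"
    and "seq_compact_space X"
    and "F \<subseteq> topspace X" and "F \<noteq> {}"
    and "multi_central_lyapunov X \<tau> F S"
    and "quotient_map X Q (collapse F)"
  shows "collapsed_map F \<tau> F = F \<and>
         (\<forall>y\<in>topspace Q. limitin Q (\<lambda>n. (collapsed_map F \<tau> ^^ n) y) F sequentially)"
proof (intro conjI ballI)
  show "collapsed_map F \<tau> F = F" by (simp add: collapsed_map_def)
next
  fix y assume y: "y \<in> topspace Q"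
  have tF: "\<tau> ` F \<subseteq> F" using assms(5) unfolding multi_central_lyapunov_def by blast
  have qi: "collapse F ` topspace X = topspace Q"
    and qo: "\<And>U. U \<subseteq> topspace Q \<Longrightarrow> openin X {x \<in> topspace X. collapse F x \<in> U} = openin Q U"
    using assms(6) unfolding quotient_map_def by auto
  obtain x0 where x0: "x0 \<in> topspace X" "y = collapse F x0" using y qi by blast
  obtain f where f: "f \<in> F" using assms(4) by blast
  have FQ: "F \<in> topspace Q" using qi f assms(3) by (force simp: collapse_def)
  show "limitin Q (\<lambda>n. (collapsed_map F \<tau> ^^ n) y) F sequentially"
    unfolding limitin_def
  proof (intro conjI allI impI)
    show "F \<in> topspace Q" by (rule FQ)
    fix U assume U: "openin Q U \<and> F \<in> U"
    define V where "V = {x \<in> topspace X. collapse F x \<in> U}"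
    have V: "openin X V" using qo[of U] U openin_subset by (auto simp: V_def)
    have FV: "F \<subseteq> V" using U assms(3) by (auto simp: V_def collapse_def)
    have "eventually (\<lambda>n. (\<tau> ^^ n) x0 \<in> V) sequentially"
      by (rule core[OF assms(1,2,5) x0(1) V FV])
    then show "eventually (\<lambda>n. (collapsed_map F \<tau> ^^ n) y \<in> U) sequentially"
      by eventually_elim (simp add: x0(2) orbit_collapse[OF tF] V_def)
  qed
qed

end
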